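(* Let $d\ge1$, $n\ge3$, $u\in\mathbb{C}\setminus\{0\}$. The defining two-sided ideal of $\mathrm{CTL}_{d,n}(u)$ in $\mathrm{Y}_{d,n}(u)$ is generated by any single element $c_{i,i+1}$, $1\le i\le n-2$. Hence $\mathrm{CTL}_{d,n}(u)$ is presented by generators $t_1,\ldots,t_n,g_1,\ldots,g_{n-1}$, the defining relations of $\mathrm{Y}_{d,n}(u)$, and the relation $c_{1,2}=0$.
   Context: The Yokonuma–Hecke algebra $\mathrm{Y}_{d,n}(u)$ is the unital associative $\mathbb{C}$-algebra with generators $g_1,\ldots,g_{n-1},t_1,\ldots,t_n$ and relations: $g_ig_j=g_jg_i$ for $|i-j|>1$; $g_{i+1}g_ig_{i+1}=g_ig_{i+1}g_i$; $t_it_j=t_jt_i$; $t_i^d=1$; $g_it_i=t_{i+1}g_i$; $g_it_{i+1}=t_ig_i$; $g_it_j=t_jg_i$ for $j\ne i,i+1$; $g_i^2=1+(u-1)e_i+(u-1)e_ig_i$, where $e_i=\frac1d\sum_{s=0}^{d-1}t_i^st_{i+1}^{d-s}$. For $w\in S_n$ with reduced expression $s_{i_1}\cdots s_{i_k}$ put $g_w=g_{i_1}\cdots g_{i_k}$; $g_{i,i+1}=\sum_{w\in\langle s_i,s_{i+1}\rangle}g_w$ and $c_{i,i+1}=\sum_{a,b,c=0}^{d-1}t_i^at_{i+1}^bt_{i+2}^c\,g_{i,i+1}$ (the sum of $t_1^{a_1}\cdots t_n^{a_n}g_w$ over the subgroup $\langle t_i,t_{i+1},t_{i+2}\rangle\rtimes\langle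 s_i,s_{i+1}\rangle$ of $(\mathbb{Z}/d\mathbb{Z})^n\rtimes S_n$). $\mathrm{CTL}_{d,n}(u)$ is the quotient of $\mathrm{Y}_{d,n}(u)$ by the two-sided ideal generated by all $c_{i,i+1}$. *)

theory Defs
  imports Complex_Main "HOL-Library.Poly_Mapping"
begin

datatype gen = G nat | T nat

datatype word = Word "gen list"

fun word_list :: "word \<Rightarrow> gen list" where "word_list (Word xs) = xs"

instantiation word :: monoid_add
begin
definition zero_word :: word where "zero_word = Word []"
definition plus_word :: "word \<Rightarrow> word \<Rightarrow> word" where
  "plus_word v w = Word (word_list v @ word_list w)"
instance
proof
  fix a b c :: word
  show "a + b + c = a + (b + c)"
    by (cases a; cases b; cases c) (simp add: plus_word_def)
  show "0 + a = a" by (cases a) (simp add: plus_word_def zero_word_def)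
  show "a + 0 = a" by (cases a) (simp add: plus_word_def zero_word_def)
qed
end

text \<open>The free associative unital C-algebra on the symbols: finitely supported
  C-valued functions on words, with convolution product (= concatenation).\<close>
type_synonym fa = "word \<Rightarrow>\<^sub>0 complex"

definition sc :: "complex \<Rightarrow> fa" where "sc c = Poly_Mapping.single (Word []) c"
definition gg :: "nat \<Rightarrow> fa" where "gg i = Poly_Mapping.single (Word [G i]) 1"
definition tt :: "nat \<Rightarrow> fa" where "tt i = Poly_Mapping.single (Word [T i]) 1"

definition valid_gen :: "nat \<Rightarrow> gen \<Rightarrow> bool" where
  "valid_gen n x = (case x of G i \<Rightarrow> 1 \<le> i \<and> i \<le> n - 1 | T i \<Rightarrow> 1 \<le> i \<and> i \<le> n)"

definition FA :: "nat \<Rightarrow> fa set" where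
  "FA n = {p. \<forall>w \<in> Poly_Mapping.keys p. \<forall>x \<in> set (word_list w). valid_gen n x}"

inductive_set ideal_gen :: "nat \<Rightarrow> fa set \<Rightarrow> fa set" for n S where
  zero: "0 \<in> ideal_gen n S"
| gen: "a \<in> FA n \<Longrightarrow> s \<in> S \<Longrightarrow> b \<in> FA n \<Longrightarrow> a * s * b \<in> ideal_gen n S"
| add: "x \<in> ideal_gen n S \<Longrightarrow> y \<in> ideal_gen n S \<Longrightarrow> x + y \<in> ideal_gen n S"

definition ee :: "nat \<Rightarrow> nat \<Rightarrow> fa" where
  "ee d i = sc (1 / of_nat d) * (\<Sum>s<d. tt i ^ s * tt (Suc i) ^ (d - s))"

definition YH_rels :: "nat \<Rightarrow> nat \<Rightarrow> complex \<Rightarrow> fa set" where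
  "YH_rels d n u =
     {gg i * gg j - gg j * gg i | i j. 1 \<le> i \<and> i \<le> n - 1 \<and> 1 \<le> j \<and> j \<le> n - 1
                                      \<and> (i > j + 1 \<or> j > i + 1)}
   \<union> {gg (i+1) * gg i * gg (i+1) - gg i * gg (i+1) * gg i | i. 1 \<le> i \<and> i \<le> n - 2}
   \<union> {tt i * tt j - tt j * tt i | i j. 1 \<le> i \<and> i \<le> n \<and> 1 \<le> j \<and> j \<le> n}
   \<union> {tt i ^ d - 1 | i. 1 \<le> i \<and> i \<le> n}
   \<union> {gg i * tt i - tt (i+1) * gg i | i. 1 \<le> i \<and> i \<le> n - 1}
   \<union> {gg i * tt (i+1) - tt i * gg i | i. 1 \<le> i \<and> i \<le> n - 1}
   \<union> {gg i * tt j - tt j * gg i | i j. 1 \<le> i \<and> i \<le> n - 1 \<and> 1 \<le> j \<and> j \<le> n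
                                      \<and> j \<noteq> i \<and> j \<noteq> i + 1}
   \<union> {gg i ^ 2 - (1 + sc (u - 1) * ee d i + sc (u - 1) * ee d i * gg i)
        | i. 1 \<le> i \<and> i \<le> n - 1}"

text \<open>g_{i,i+1}: sum of g_w over w in the subgroup generated by s_i, s_{i+1}
  (reduced words: 1, s_i, s_{i+1}, s_i s_{i+1}, s_{i+1} s_i, s_i s_{i+1} s_i).\<close>
definition gsum :: "nat \<Rightarrow> fa" where
  "gsum i = 1 + gg i + gg (i+1) + gg i * gg (i+1) + gg (i+1) * gg i
            + gg i * gg (i+1) * gg i"

definition cc :: "nat \<Rightarrow> nat \<Rightarrow> fa" where
  "cc d i = (\<Sum>a<d. \<Sum>b<d. \<Sum>c<d. tt i ^ a * tt (i+1) ^ b * tt (i+2) ^ c) * gsum i"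

end

theory Submission
  imports Defs
begin



lemma word_list_plus [simp]: "word_list (a + b) = word_list a @ word_list b"
  by (simp add: plus_word_def)

lemma FA_0 [simp]: "0 \<in> FA n" by (simp add: FA_def)
lemma FA_1 [simp]: "1 \<in> FA n" by (simp add: FA_def zero_word_def)
lemma FA_add [simp]: "p \<in> FA n \<Longrightarrow> q \<in> FA n \<Longrightarrow> p + q \<in> FA n"
  unfolding FA_def using keys_add[of p q] by auto
lemma FA_uminus [simp]: "p \<in> FA n \<Longrightarrow> - p \<in> FA n"
  unfolding FA_def by simp
lemma FA_diff [simp]: "p \<in> FA n \<Longrightarrow> q \<in> FA n \<Longrightarrow> p - q \<in> FA n"
  unfolding FA_def using keys_diff[of p q] by auto
lemma FA_mult [simp]: "p \<in> FA n \<Longrightarrow> q \<in> FA n \<Longrightarrow> p * q \<in> FA n"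
proof -
  assume p: "p \<in> FA n" and q: "q \<in> FA n"
  show ?thesis unfolding FA_def
  proof (intro CollectI ballI)
    fix w x assume w: "w \<in> Poly_Mapping.keys (p * q)" and x: "x \<in> set (word_list w)"
    from w keys_mult[of p q] obtain a b where "w = a + b" "a \<in> Poly_Mapping.keys p" "b \<in> Poly_Mapping.keys q" by blast
    with p q x show "valid_gen n x" unfolding FA_def by auto
  qed
qed
lemma FA_power [simp]: "p \<in> FA n \<Longrightarrow> p ^ m \<in> FA n"
  by (induction m) simp_all
lemma FA_sum [simp]: "(\<And>i. i \<in> A \<Longrightarrow> f i \<in> FA n) \<Longrightarrow> sum f A \<in> FA n"
  by (induction A rule: infinite_finite_induct) simp_all
lemma FA_sc [simp]: "sc c \<in> FA n" by (simp add: FA_def sc_def)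
lemma FA_gg [simp]: "1 \<le> i \<Longrightarrow> i \<le> n - 1 \<Longrightarrow> gg i \<in> FA n"
  by (simp add: FA_def gg_def valid_gen_def)
lemma FA_tt [simp]: "1 \<le> i \<Longrightarrow> i \<le> n \<Longrightarrow> tt i \<in> FA n"
  by (simp add: FA_def tt_def valid_gen_def)
lemma FA_ee [simp]: "1 \<le> i \<Longrightarrow> i \<le> n - 1 \<Longrightarrow> ee d i \<in> FA n"
  by (simp add: ee_def)
lemma FA_gsum [simp]: "1 \<le> i \<Longrightarrow> i + 2 \<le> n \<Longrightarrow> gsum i \<in> FA n"
  by (simp add: gsum_def)
lemma FA_cc [simp]: "1 \<le> i \<Longrightarrow> i + 2 \<le> n \<Longrightarrow> cc d i \<in> FA n"
  by (simp add: cc_def)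

lemma sc_def': "sc c = Poly_Mapping.single 0 c" by (simp add: sc_def zero_word_def)

lemma Sany_aux: "Sum_any (\<lambda>aa. c when 0 = aa when x = a + aa) = (c when x = (a::word))"
proof -
  have "\<And>aa. (c when 0 = aa when x = a + aa) = ((c when x = a) when aa = 0)" by (auto simp: when_def)
  then show ?thesis by simp
qed

lemma sc_central: "sc c * p = p * sc c"
proof -
  have "Poly_Mapping.single (0::word) c * p = Poly_Mapping.map ((*) c) p" by (simp add: mult_map_scale_conv_mult)
  also have "\<dots> = p * Poly_Mapping.single 0 c"
    apply transfer
    apply (rule ext) apply (simp only: prod_fun_def Sany_aux mult_when Sum_any_when_equal')
    apply (simp add: when_def)
    done
  finally show ?thesis by (simp add: sc_def')
qed

lemma sc_add: "sc (a + b) = sc a + sc b" by (simp add: sc_def' single_add)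
lemma sc_mult: "sc (a * b) = sc a * sc b" by (simp add: sc_def' mult_single)
lemma sc_one [simp]: "sc 1 = 1" by (simp add: sc_def')
lemma sc_zero [simp]: "sc 0 = 0" by (simp add: sc_def')
lemma sc_of_nat: "sc (of_nat m) = of_nat m" by (simp add: sc_def')

lemma ideal_mult_left: assumes "x \<in> ideal_gen n S" "a \<in> FA n" shows "a * x \<in> ideal_gen n S"
  using assms proof (induction x rule: ideal_gen.induct)
  case zero then show ?case by (simp add: ideal_gen.zero)
next
  case (gen a' s b) then show ?case
    using ideal_gen.gen[of "a * a'" n s S b] by (simp add: mult.assoc)
next
  case (add x y) then show ?case by (simp add: distrib_left ideal_gen.add)
qed

lemma ideal_mult_right: assumes "x \<in> ideal_gen n S" "b \<in> FA n" shows "x * b \<in> ideal_gen n S"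
  using assms proof (induction x rule: ideal_gen.induct)
  case zero then show ?case by (simp add: ideal_gen.zero)
next
  case (gen a s b') then show ?case
    using ideal_gen.gen[of a n s S "b' * b"] by (simp add: mult.assoc)
next
  case (add x y) then show ?case by (simp add: distrib_right ideal_gen.add)
qed

lemma ideal_uminus: "x \<in> ideal_gen n S \<Longrightarrow> - x \<in> ideal_gen n S"
  using ideal_mult_left[of x n S "-1"] by simp

lemma ideal_diff: "x \<in> ideal_gen n S \<Longrightarrow> y \<in> ideal_gen n S \<Longrightarrow> x - y \<in> ideal_gen n S"
proof -
  assume x: "x \<in> ideal_gen n S" and y: "y \<in> ideal_gen n S"
  from ideal_gen.add[OF x ideal_uminus[OF y]] show ?thesis by (simp only: diff_conv_add_uminus)
qed

lemma ideal_sum: "(\<And>i. i \<in> A \<Longrightarrow> f i \<in> ideal_gen n S) \<Longrightarrow> sum f A \<in> ideal_gen n S"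
proof (induction A rule: infinite_finite_induct)
  case (infinite A)
  then have "sum f A = 0" by (intro sum.infinite)
  then show ?case by (simp only: ideal_gen.zero)
next
  case empty then show ?case by (simp only: sum.empty ideal_gen.zero)
next
  case (insert x F)
  then have "f x \<in> ideal_gen n S" "sum f F \<in> ideal_gen n S" by auto
  then have "f x + sum f F \<in> ideal_gen n S" by (rule ideal_gen.add)
  moreover have "sum f (insert x F) = f x + sum f F" using insert(1,2) by (rule sum.insert)
  ultimately show ?case by (simp only:)
qed

lemma ideal_base: "s \<in> S \<Longrightarrow> s \<in> ideal_gen n S"
  using ideal_gen.gen[of 1 n s S 1] by simp

lemma ideal_subset: assumes "x \<in> ideal_gen n S'" and sub: "S' \<subseteq> ideal_gen n S" shows "x \<in> ideal_gen n S"
  using assms(1) proof (induction x rule: ideal_gen.induct)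
  case zero then show ?case by (rule ideal_gen.zero)
next
  case (gen a s b)
  have "s \<in> ideal_gen n S" using gen(2) sub by blast
  then have "a * s \<in> ideal_gen n S" using gen(1) by (rule ideal_mult_left)
  then show ?case using gen(3) by (rule ideal_mult_right)
next
  case (add x y) show ?case using add(3,4) by (rule ideal_gen.add)
qed

lemma ideal_mono: "S' \<subseteq> S \<Longrightarrow> x \<in> ideal_gen n S' \<Longrightarrow> x \<in> ideal_gen n S"
  proof -
  assume a: "S' \<subseteq> S" and x: "x \<in> ideal_gen n S'"
  have "S' \<subseteq> ideal_gen n S"
  proof
    fix s assume "s \<in> S'"
    with a have "s \<in> S" by (rule subsetD)
    then show "s \<in> ideal_gen n S" by (rule ideal_base)
  qed
  from x this show ?thesis by (rule ideal_subset)
qed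




locale yh =
  fixes d n :: nat and u :: complex and S :: "fa set"
  assumes R: "YH_rels d n u \<subseteq> S" and d1: "1 \<le> d" and u0: "u \<noteq> 0"
begin

definition eqv :: "fa \<Rightarrow> fa \<Rightarrow> bool" (infix "\<approx>" 50) where
  "x \<approx> y \<longleftrightarrow> x - y \<in> ideal_gen n S"

lemma eqv_refl [simp]: "x \<approx> x" by (simp add: eqv_def ideal_gen.zero)
lemma eqv_sym: "x \<approx> y \<Longrightarrow> y \<approx> x"
  unfolding eqv_def using ideal_uminus[of "x - y"] by simp
lemma eqv_trans: "x \<approx> y \<Longrightarrow> y \<approx> z \<Longrightarrow> x \<approx> z"
  unfolding eqv_def using ideal_gen.add[of "x - y" n S "y - z"] by simp
lemma eqv_add: "x \<approx> x' \<Longrightarrow> y \<approx> y' \<Longrightarrow> x + y \<approx> x' + y'"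
  unfolding eqv_def using ideal_gen.add[of "x - x'" n S "y - y'"] by (simp add: algebra_simps)
lemma eqv_diff: "x \<approx> x' \<Longrightarrow> y \<approx> y' \<Longrightarrow> x - y \<approx> x' - y'"
  unfolding eqv_def using ideal_diff[of "x - x'" n S "y - y'"] by (simp add: algebra_simps)
lemma eqv_multL: "a \<in> FA n \<Longrightarrow> x \<approx> y \<Longrightarrow> a * x \<approx> a * y"
  unfolding eqv_def using ideal_mult_left[of "x - y" n S a] by (simp add: algebra_simps)
lemma eqv_multR: "a \<in> FA n \<Longrightarrow> x \<approx> y \<Longrightarrow> x * a \<approx> y * a"
  unfolding eqv_def using ideal_mult_right[of "x - y" n S a] by (simp add: algebra_simps)
lemma eqv_mult: "x \<approx> x' \<Longrightarrow> y \<approx> y' \<Longrightarrow> x' \<in> FA n \<Longrightarrow> y \<in> FA n \<Longrightarrow> x * y \<approx> x' * y'"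
  by (meson eqv_multL eqv_multR eqv_trans)
lemma eqv_sum: "(\<And>i. i \<in> A \<Longrightarrow> f i \<approx> g i) \<Longrightarrow> sum f A \<approx> sum g A"
  unfolding eqv_def using ideal_sum[of A "\<lambda>i. f i - g i" n S] by (simp add: sum_subtractf)
lemma eqv_sc: "x \<approx> y \<Longrightarrow> sc c * x \<approx> sc c * y"
  by (rule eqv_multL) simp_all
lemma eqv_rel: "l - r \<in> YH_rels d n u \<Longrightarrow> l \<approx> r"
  unfolding eqv_def using R ideal_base[of "l - r" S n] by blast
lemma eqv_0: "x \<in> ideal_gen n S \<Longrightarrow> x \<approx> 0" by (simp add: eqv_def)

lemma rel_gfar: "1 \<le> i \<Longrightarrow> i \<le> n - 1 \<Longrightarrow> 1 \<le> j \<Longrightarrow> j \<le> n - 1 \<Longrightarrow> i > j + 1 \<or> j > i + 1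
   \<Longrightarrow> gg i * gg j \<approx> gg j * gg i"
  apply (rule eqv_rel) unfolding YH_rels_def
  apply (intro UnI1) by blast

lemma rel_braid: "1 \<le> i \<Longrightarrow> i \<le> n - 2 \<Longrightarrow> gg (Suc i) * gg i * gg (Suc i) \<approx> gg i * gg (Suc i) * gg i"
  apply (rule eqv_rel) unfolding YH_rels_def
  apply (rule UnI1, rule UnI1, rule UnI1, rule UnI1, rule UnI1, rule UnI1, rule UnI2)
  apply (rule CollectI, rule exI[of _ i]) by simp

lemma rel_tcomm: "1 \<le> i \<Longrightarrow> i \<le> n \<Longrightarrow> 1 \<le> j \<Longrightarrow> j \<le> n \<Longrightarrow> tt i * tt j \<approx> tt j * tt i"
  apply (rule eqv_rel) unfolding YH_rels_def
  apply (rule UnI1, rule UnI1, rule UnI1, rule UnI1, rule UnI1, rule UnI2)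
  by blast

lemma rel_tpow: "1 \<le> i \<Longrightarrow> i \<le> n \<Longrightarrow> tt i ^ d \<approx> 1"
  apply (rule eqv_rel) unfolding YH_rels_def
  apply (rule UnI1, rule UnI1, rule UnI1, rule UnI1, rule UnI2)
  by blast

lemma rel_gt1: "1 \<le> i \<Longrightarrow> i \<le> n - 1 \<Longrightarrow> gg i * tt i \<approx> tt (Suc i) * gg i"
  apply (rule eqv_rel) unfolding YH_rels_def
  apply (rule UnI1, rule UnI1, rule UnI1, rule UnI2)
  apply (rule CollectI, rule exI[of _ i]) by simp

lemma rel_gt2: "1 \<le> i \<Longrightarrow> i \<le> n - 1 \<Longrightarrow> gg i * tt (Suc i) \<approx> tt i * gg i"
  apply (rule eqv_rel) unfolding YH_rels_def
  apply (rule UnI1, rule UnI1, rule UnI2)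
  apply (rule CollectI, rule exI[of _ i]) by simp

lemma rel_gt3: "1 \<le> i \<Longrightarrow> i \<le> n - 1 \<Longrightarrow> 1 \<le> j \<Longrightarrow> j \<le> n \<Longrightarrow> j \<noteq> i \<Longrightarrow> j \<noteq> Suc i
   \<Longrightarrow> gg i * tt j \<approx> tt j * gg i"
  apply (rule eqv_rel) unfolding YH_rels_def
  apply (rule UnI1, rule UnI2)
  apply (rule CollectI, rule exI[of _ i], rule exI[of _ j]) by simp

lemma rel_quad: "1 \<le> i \<Longrightarrow> i \<le> n - 1 \<Longrightarrow>
   gg i * gg i \<approx> 1 + sc (u - 1) * ee d i + sc (u - 1) * ee d i * gg i"
  apply (rule eqv_rel) unfolding YH_rels_def
  apply (rule UnI2)
  apply (rule CollectI, rule exI[of _ i]) by (simp add: power2_eq_square)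

end



context yh begin

declare eqv_trans [trans]

definition itw :: "fa \<Rightarrow> fa \<Rightarrow> fa \<Rightarrow> bool" where
  "itw g x y \<longleftrightarrow> g * x \<approx> y * g"

lemma itw_one: "itw g 1 1" by (simp add: itw_def)

lemma itw_add: "itw g x y \<Longrightarrow> itw g x' y' \<Longrightarrow> itw g (x + x') (y + y')"
  unfolding itw_def by (simp add: distrib_left distrib_right eqv_add)

lemma itw_mult: "itw g x y \<Longrightarrow> itw g x' y' \<Longrightarrow> x' \<in> FA n \<Longrightarrow> y \<in> FA n \<Longrightarrow> itw g (x * x') (y * y')"
  unfolding itw_def
proof -
  assume a: "g * x \<approx> y * g" and b: "g * x' \<approx> y' * g" and x': "x' \<in> FA n" and y: "y \<in> FA n"
  have "g * (x * x') = (g * x) * x'" by (simp add: mult.assoc)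
  also have "\<dots> \<approx> (y * g) * x'" using a x' by (rule eqv_multR[rotated])
  also have "(y * g) * x' = y * (g * x')" by (simp add: mult.assoc)
  finally have 1: "g * (x * x') \<approx> y * (g * x')" .
  have "y * (g * x') \<approx> y * (y' * g)" using y b by (rule eqv_multL)
  with 1 show "g * (x * x') \<approx> y * y' * g" by (simp add: mult.assoc eqv_trans)
qed

lemma itw_pow: "itw g x y \<Longrightarrow> x \<in> FA n \<Longrightarrow> y \<in> FA n \<Longrightarrow> itw g (x ^ m) (y ^ m)"
proof (induction m)
  case 0 then show ?case by (simp add: itw_one)
next
  case (Suc m) then show ?case by (simp add: itw_mult)
qed

lemma itw_sum: "(\<And>i. i \<in> A \<Longrightarrow> itw g (f i) (f' i)) \<Longrightarrow> itw g (sum f A) (sum f' A)"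
  unfolding itw_def by (simp add: sum_distrib_left sum_distrib_right eqv_sum)

lemma itw_sc: "itw g x y \<Longrightarrow> itw g (sc c * x) (sc c * y)"
  unfolding itw_def
proof -
  assume "g * x \<approx> y * g"
  then have "sc c * (g * x) \<approx> sc c * (y * g)" by (rule eqv_sc)
  moreover have "g * (sc c * x) = sc c * (g * x)"
  proof -
    have "g * (sc c * x) = (g * sc c) * x" by (simp only: mult.assoc)
    also have "\<dots> = (sc c * g) * x" by (simp only: sc_central)
    also have "\<dots> = sc c * (g * x)" by (simp only: mult.assoc)
    finally show ?thesis .
  qed
  ultimately show "g * (sc c * x) \<approx> sc c * y * g" by (simp add: mult.assoc)
qed

lemma itw_chain: "itw b x y \<Longrightarrow> itw a y z \<Longrightarrow> a \<in> FA n \<Longrightarrow> b \<in> FA n \<Longrightarrow> itw (a * b) x z"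
  unfolding itw_def
proof -
  assume 1: "b * x \<approx> y * b" and 2: "a * y \<approx> z * a" and a: "a \<in> FA n" and b: "b \<in> FA n"
  have "a * (b * x) \<approx> a * (y * b)" using a 1 by (rule eqv_multL)
  moreover have "(a * y) * b \<approx> (z * a) * b" using b 2 by (rule eqv_multR)
  ultimately show "a * b * x \<approx> z * (a * b)" by (simp add: mult.assoc eqv_trans)
qed

lemma itw_eqvR: "itw g x y \<Longrightarrow> y \<approx> y' \<Longrightarrow> g \<in> FA n \<Longrightarrow> itw g x y'"
  unfolding itw_def by (meson eqv_multR eqv_trans)

lemma itw_eqvL: "itw g x y \<Longrightarrow> x \<approx> x' \<Longrightarrow> g \<in> FA n \<Longrightarrow> itw g x' y"
  unfolding itw_def by (meson eqv_multL eqv_trans eqv_sym)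

lemma comm_sym: "itw a b b \<Longrightarrow> itw b a a"
  unfolding itw_def by (rule eqv_sym)

lemma comm_pow2: "itw a b b \<Longrightarrow> a \<in> FA n \<Longrightarrow> b \<in> FA n \<Longrightarrow> itw (a ^ m) (b ^ k) (b ^ k)"
proof -
  assume ab: "itw a b b" and a: "a \<in> FA n" and b: "b \<in> FA n"
  have "itw a (b ^ k) (b ^ k)" using ab b b by (rule itw_pow)
  then have "itw (b ^ k) a a" by (rule comm_sym)
  then have "itw (b ^ k) (a ^ m) (a ^ m)" using a a by (rule itw_pow)
  then show ?thesis by (rule comm_sym)
qed

lemma pow_eqv_one: "a \<in> FA n \<Longrightarrow> a \<approx> 1 \<Longrightarrow> a ^ m \<approx> 1"
proof (induction m)
  case 0 then show ?case by simp
next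
  case (Suc m)
  then have "a * a ^ m \<approx> 1 * 1" by (intro eqv_mult) simp_all
  then show ?case by simp
qed

lemma pow_prod: "itw b a a \<Longrightarrow> a \<in> FA n \<Longrightarrow> b \<in> FA n \<Longrightarrow> (a * b) ^ s \<approx> a ^ s * b ^ s"
proof (induction s)
  case 0 then show ?case by simp
next
  case (Suc s)
  have c: "b ^ s * a \<approx> a * b ^ s"
    using comm_pow2[OF Suc(2) Suc(4) Suc(3), of s 1] by (simp add: itw_def)
  have "(a * b) ^ Suc s = (a * b) ^ s * (a * b)" by (rule power_Suc2)
  also have "\<dots> \<approx> (a ^ s * b ^ s) * (a * b)" using Suc by (intro eqv_multR) simp_all
  also have "(a ^ s * b ^ s) * (a * b) = a ^ s * ((b ^ s * a) * b)" by (simp add: mult.assoc)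
  also have "\<dots> \<approx> a ^ s * ((a * b ^ s) * b)" using c Suc by (intro eqv_multL eqv_multR) simp_all
  also have "a ^ s * ((a * b ^ s) * b) = a ^ Suc s * b ^ Suc s"
    by (simp only: mult.assoc power_Suc2)
  finally show ?case .
qed

definition G :: "fa \<Rightarrow> fa" where "G w = (\<Sum>s<d. w ^ s)"

lemma FA_G [simp]: "w \<in> FA n \<Longrightarrow> G w \<in> FA n" by (simp add: G_def)

lemma G_w: "w ^ d \<approx> 1 \<Longrightarrow> G w * w \<approx> G w"
proof -
  assume h: "w ^ d \<approx> 1"
  have "G w * w - G w = (\<Sum>s<d. w ^ Suc s - w ^ s)"
    by (simp add: G_def sum_distrib_right sum_subtractf power_commutes)
  also have "\<dots> = w ^ d - 1" by (simp only: sum_lessThan_telescope[of "\<lambda>s. w ^ s" d] power_0)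
  finally show ?thesis using h by (simp add: eqv_def)
qed

lemma G_wr: "w \<in> FA n \<Longrightarrow> w ^ d \<approx> 1 \<Longrightarrow> G w * w ^ r \<approx> G w"
proof (induction r)
  case 0 then show ?case by simp
next
  case (Suc r)
  have "G w * w ^ Suc r = (G w * w ^ r) * w" by (simp add: mult.assoc power_commutes)
  also have "\<dots> \<approx> G w * w" using Suc by (intro eqv_multR) simp_all
  also have "\<dots> \<approx> G w" using Suc G_w by simp
  finally show ?case .
qed

lemma G_sq: "w \<in> FA n \<Longrightarrow> w ^ d \<approx> 1 \<Longrightarrow> G w * G w \<approx> of_nat d * G w"
proof -
  assume w: "w \<in> FA n" and h: "w ^ d \<approx> 1"
  have "G w * G w = (\<Sum>r<d. G w * w ^ r)" by (simp add: G_def[of w] sum_distrib_left)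
  also have "\<dots> \<approx> (\<Sum>r<d. G w)" using G_wr[OF w h] by (intro eqv_sum)
  also have "(\<Sum>r<d. G w) = of_nat d * G w" by simp
  finally show ?thesis .
qed

end



lemma FA_of_nat [simp]: "of_nat m \<in> FA n" using FA_sc[of "of_nat m" n] by (simp add: sc_of_nat)

context yh begin

definition E :: "nat \<Rightarrow> fa" where "E k = (\<Sum>s<d. tt k ^ s * tt (Suc k) ^ (d - s))"
definition ww :: "nat \<Rightarrow> fa" where "ww k = tt k * tt (Suc k) ^ (d - 1)"

lemma ee_E: "ee d k = sc (1 / of_nat d) * E k" by (simp add: ee_def E_def)

lemma FA_E [simp]: "1 \<le> k \<Longrightarrow> k \<le> n - 1 \<Longrightarrow> E k \<in> FA n" by (simp add: E_def)
lemma FA_ww [simp]: "1 \<le> k \<Longrightarrow> k \<le> n - 1 \<Longrightarrow> ww k \<in> FA n" by (simp add: ww_def)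

lemma arith1: "1 \<le> (d::nat) \<Longrightarrow> s < d \<Longrightarrow> s \<noteq> 0 \<Longrightarrow> (d - 1) * s = d * (s - 1) + (d - s)"
proof -
  assume "1 \<le> d" "s < d" "s \<noteq> 0"
  then obtain d' s' where dd: "d = Suc d'" and ss: "s = Suc s'"
    by (cases d; cases s) auto
  with \<open>s < d\<close> have "s' < d'" by simp
  then show ?thesis unfolding dd ss by (simp add: algebra_simps)
qed

lemma ypow: "1 \<le> j \<Longrightarrow> j \<le> n \<Longrightarrow> s < d \<Longrightarrow> tt j ^ ((d - 1) * s) \<approx> tt j ^ (d - s)"
proof (cases "s = 0")
  case True
  assume "1 \<le> j" "j \<le> n"
  then have "tt j ^ d \<approx> 1" by (rule rel_tpow)
  then have "1 \<approx> tt j ^ d" by (rule eqv_sym)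
  then show ?thesis using True by simp
next
  case False
  assume j: "1 \<le> j" "j \<le> n" and s: "s < d"
  have "tt j ^ ((d - 1) * s) = (tt j ^ d) ^ (s - 1) * tt j ^ (d - s)"
    using arith1[OF d1 s False] by (simp add: power_add power_mult)
  also have "\<dots> \<approx> 1 * tt j ^ (d - s)"
    using j by (intro eqv_multR pow_eqv_one rel_tpow) simp_all
  finally show ?thesis by simp
qed

lemma eqv_sym_ypow: "1 \<le> j \<Longrightarrow> j \<le> n \<Longrightarrow> s < d \<Longrightarrow> tt j ^ (d - s) \<approx> tt j ^ ((d - 1) * s)"
  by (rule eqv_sym, rule ypow)

lemma E_G: assumes k: "1 \<le> k" "k \<le> n - 1" shows "E k \<approx> G (ww k)"
proof -
  let ?x = "tt k" and ?y = "tt (Suc k)" and ?z = "tt (Suc k) ^ (d - 1)"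
  have x: "?x \<in> FA n" and y: "?y \<in> FA n" using k by simp_all
  have yx: "itw ?y ?x ?x" unfolding itw_def using k by (intro rel_tcomm) simp_all
  have c: "itw ?z ?x ?x" using comm_pow2[OF yx y x, of "d - 1" 1] by simp
  show ?thesis unfolding E_def G_def
  proof (rule eqv_sum)
    fix s assume "s \<in> {..<d}"
    then have s: "s < d" by simp
    have "?x ^ s * ?y ^ (d - s) \<approx> ?x ^ s * ?y ^ ((d - 1) * s)"
      using k s by (intro eqv_multL eqv_sym_ypow) simp_all
    also have "?y ^ ((d - 1) * s) = ?z ^ s" by (simp add: power_mult)
    also have "?x ^ s * ?z ^ s \<approx> (?x * ?z) ^ s"
    proof -
      have pp: "(?x * ?z) ^ s \<approx> ?x ^ s * ?z ^ s" using pow_prod[OF c x] y by simp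
      then show ?thesis by (rule eqv_sym)
    qed
    finally show "?x ^ s * ?y ^ (d - s) \<approx> ww k ^ s" by (simp add: ww_def)
  qed
qed

lemma eqv_sym_E_G: "1 \<le> k \<Longrightarrow> k \<le> n - 1 \<Longrightarrow> G (ww k) \<approx> E k"
  by (rule eqv_sym, rule E_G)

lemma ww_pow: assumes k: "1 \<le> k" "k \<le> n - 1" shows "ww k ^ d \<approx> 1"
proof -
  let ?x = "tt k" and ?y = "tt (Suc k)" and ?z = "tt (Suc k) ^ (d - 1)"
  have x: "?x \<in> FA n" and y: "?y \<in> FA n" using k by simp_all
  have yx: "itw ?y ?x ?x" unfolding itw_def using k by (intro rel_tcomm) simp_all
  have c: "itw ?z ?x ?x" using comm_pow2[OF yx y x, of "d - 1" 1] by simp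
  have "ww k ^ d \<approx> ?x ^ d * ?z ^ d" unfolding ww_def using pow_prod[OF c x] y by simp
  also have "?z ^ d = (?y ^ d) ^ (d - 1)" by (simp add: power_mult[symmetric] mult.commute)
  also have "?x ^ d * (?y ^ d) ^ (d - 1) \<approx> 1 * 1"
    using k by (intro eqv_mult rel_tpow pow_eqv_one) simp_all
  finally show ?thesis by simp
qed

lemma e_idem: assumes k: "1 \<le> k" "k \<le> n - 1" shows "ee d k * ee d k \<approx> ee d k"
proof -
  let ?c = "sc (1 / of_nat d)"
  have "ee d k * ee d k = ?c * ((E k * ?c) * E k)" by (simp add: ee_E mult.assoc)
  also have "\<dots> = ?c * ((?c * E k) * E k)" by (simp only: sc_central)
  also have "\<dots> = ?c * ?c * (E k * E k)" by (simp only: mult.assoc)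
  also have "\<dots> \<approx> ?c * ?c * (G (ww k) * G (ww k))"
    using k E_G by (intro eqv_multL eqv_mult) simp_all
  also have "\<dots> \<approx> ?c * ?c * (of_nat d * G (ww k))"
    using k ww_pow by (intro eqv_multL G_sq) simp_all
  also have "\<dots> \<approx> ?c * ?c * (of_nat d * E k)"
    using k by (intro eqv_multL eqv_sym_E_G) simp_all
  also have "?c * ?c * (of_nat d * E k) = (?c * ?c * sc (of_nat d)) * E k"
    by (simp only: sc_of_nat mult.assoc)
  also have "?c * ?c * sc (of_nat d) = sc (1 / of_nat d * (1 / of_nat d) * of_nat d)"
    by (simp only: sc_mult)
  also have "(1 / of_nat d * (1 / of_nat d) * of_nat d) = (1 / of_nat d :: complex)"
    using d1 by (simp add: field_simps)
  also have "sc (1 / of_nat d) * E k = ee d k" by (simp add: ee_E)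
  finally show ?thesis .
qed

lemma e_comm: assumes k: "1 \<le> k" "k \<le> n - 1" shows "gg k * ee d k \<approx> ee d k * gg k"
proof -
  let ?x = "tt k" and ?y = "tt (Suc k)" and ?g = "gg k"
  have x: "?x \<in> FA n" and y: "?y \<in> FA n" and g: "?g \<in> FA n" using k by simp_all
  have yx: "itw ?y ?x ?x" unfolding itw_def using k by (intro rel_tcomm) simp_all
  have gx: "itw ?g ?x ?y" unfolding itw_def using k by (intro rel_gt1) simp_all
  have gy: "itw ?g ?y ?x" unfolding itw_def using k by (intro rel_gt2) simp_all
  define E' where "E' = (\<Sum>s<d. ?y ^ s * ?x ^ (d - s))"
  have 1: "itw ?g (E k) E'" unfolding E_def E'_def
    using x y by (intro itw_sum itw_mult itw_pow gx gy) simp_all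
  have "E' \<approx> (\<Sum>s<d. ?x ^ (d - s) * ?y ^ s)" unfolding E'_def
    using comm_pow2[OF yx y x] by (intro eqv_sum) (simp add: itw_def)
  also have "\<dots> \<approx> E k"
  proof -
    obtain d' where dd: "d = Suc d'" using d1 by (cases d) auto
    have A: "(\<Sum>s<d. ?x ^ (d - s) * ?y ^ s) = ?x ^ d + (\<Sum>i<d'. ?x ^ (d - Suc i) * ?y ^ Suc i)"
      unfolding dd by (simp only: sum.lessThan_Suc_shift) simp
    have B: "E k = ?y ^ d + (\<Sum>i<d'. ?x ^ Suc i * ?y ^ (d - Suc i))"
      unfolding E_def unfolding dd by (simp only: sum.lessThan_Suc_shift) simp
    have C: "(\<Sum>i<d'. ?x ^ Suc i * ?y ^ (d - Suc i)) = (\<Sum>i<d'. ?x ^ (d - Suc i) * ?y ^ Suc i)"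
    proof -
      have "(\<Sum>i<d'. ?x ^ Suc i * ?y ^ (d - Suc i)) = (\<Sum>i<d'. ?x ^ Suc (d' - Suc i) * ?y ^ (d - Suc (d' - Suc i)))"
        by (rule sum.nat_diff_reindex[symmetric])
      also have "\<dots> = (\<Sum>i<d'. ?x ^ (d - Suc i) * ?y ^ Suc i)"
        by (rule sum.cong) (auto simp: dd Suc_diff_Suc)
      finally show ?thesis .
    qed
    have x1: "?x ^ d \<approx> 1" using k by (intro rel_tpow) simp_all
    have y1: "?y ^ d \<approx> 1" using k by (intro rel_tpow) simp_all
    have "?x ^ d \<approx> ?y ^ d" using x1 eqv_sym[OF y1] by (rule eqv_trans)
    then show ?thesis unfolding A B C by (intro eqv_add) simp_all
  qed
  finally have 2: "E' \<approx> E k" .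
  have "itw ?g (ee d k) (sc (1 / of_nat d) * E')" unfolding ee_E using 1 by (rule itw_sc)
  then have "itw ?g (ee d k) (ee d k)" unfolding ee_E using 2 g by (rule itw_eqvR[OF _ eqv_sc])
  then show ?thesis by (simp add: itw_def)
qed

end



context yh begin

definition hinv :: "nat \<Rightarrow> fa" where
  "hinv k = gg k + sc (1 / u - 1) * ee d k + sc (1 / u - 1) * ee d k * gg k"

lemma FA_hinv [simp]: "1 \<le> k \<Longrightarrow> k \<le> n - 1 \<Longrightarrow> hinv k \<in> FA n" by (simp add: hinv_def)

lemma scal0: "sc (u - 1) + sc (1 / u - 1) + sc (1 / u - 1) * sc (u - 1) = 0"
proof -
  have "(u - 1) + (1 / u - 1) + (1 / u - 1) * (u - 1) = 0" using u0 by (simp add: field_simps)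
  then have "sc ((u - 1) + (1 / u - 1) + (1 / u - 1) * (u - 1)) = 0" by simp
  then show ?thesis by (simp only: sc_add sc_mult)
qed

lemma hg: assumes k: "1 \<le> k" "k \<le> n - 1" shows "hinv k * gg k \<approx> 1"
proof -
  let ?g = "gg k" and ?e = "ee d k" and ?a = "sc (u - 1)" and ?b = "sc (1 / u - 1)"
  have g: "?g \<in> FA n" and e: "?e \<in> FA n" using k by simp_all
  have q: "?g * ?g \<approx> 1 + ?a * ?e + ?a * ?e * ?g" using k by (rule rel_quad)
  have ee: "?e * ?e \<approx> ?e" using k by (rule e_idem)
  have ea: "?e * ?a = ?a * ?e" by (rule sc_central[symmetric])
  have "hinv k * ?g = ?g * ?g + ?b * (?e * ?g) + ?b * (?e * (?g * ?g))"
    by (simp add: hinv_def algebra_simps)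
  also have "\<dots> \<approx> (1 + ?a * ?e + ?a * ?e * ?g) + ?b * (?e * ?g) + ?b * (?e * (1 + ?a * ?e + ?a * ?e * ?g))"
    using q e by (intro eqv_add eqv_refl eqv_sc eqv_multL)
  also have "?e * (1 + ?a * ?e + ?a * ?e * ?g) = ?e + ?a * (?e * ?e) + ?a * (?e * ?e) * ?g"
    by (simp add: distrib_left mult.assoc[symmetric] ea)
  also have "(1 + ?a * ?e + ?a * ?e * ?g) + ?b * (?e * ?g) + ?b * (?e + ?a * (?e * ?e) + ?a * (?e * ?e) * ?g)
       \<approx> (1 + ?a * ?e + ?a * ?e * ?g) + ?b * (?e * ?g) + ?b * (?e + ?a * ?e + ?a * ?e * ?g)"
    using ee g by (intro eqv_add eqv_refl eqv_sc eqv_multR) 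
  also have "(1 + ?a * ?e + ?a * ?e * ?g) + ?b * (?e * ?g) + ?b * (?e + ?a * ?e + ?a * ?e * ?g)
      = 1 + (?a + ?b + ?b * ?a) * ?e + (?a + ?b + ?b * ?a) * ?e * ?g"
    by (simp add: algebra_simps)
  also have "\<dots> = 1" by (simp only: scal0 mult_zero_left add_0_right)
  finally show ?thesis .
qed

lemma gh: assumes k: "1 \<le> k" "k \<le> n - 1" shows "gg k * hinv k \<approx> 1"
proof -
  let ?g = "gg k" and ?e = "ee d k" and ?b = "sc (1 / u - 1)"
  have g: "?g \<in> FA n" and e: "?e \<in> FA n" using k by simp_all
  have gb: "?g * ?b = ?b * ?g" by (rule sc_central[symmetric])
  have c: "?g * ?e - ?e * ?g \<in> ideal_gen n S" using e_comm[OF k] by (simp add: eqv_def)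
  have "?g * hinv k - hinv k * ?g = ?b * (?g * ?e - ?e * ?g) + ?b * ((?g * ?e - ?e * ?g) * ?g)"
    by (simp add: hinv_def distrib_left distrib_right left_diff_distrib right_diff_distrib
        mult.assoc[symmetric] gb add_ac)
  also have "\<dots> \<in> ideal_gen n S"
    using c g by (intro ideal_gen.add ideal_mult_left ideal_mult_right) simp_all
  finally have "?g * hinv k \<approx> hinv k * ?g" by (simp add: eqv_def)
  then show ?thesis using hg[OF k] by (rule eqv_trans)
qed

lemma cancel: "x * y \<approx> 1 \<Longrightarrow> p \<in> FA n \<Longrightarrow> q \<in> FA n \<Longrightarrow> p * x * y * q \<approx> p * q"
proof -
  assume xy: "x * y \<approx> 1" and p: "p \<in> FA n" and q: "q \<in> FA n"
  have "p * x * y * q = p * (x * y) * q" by (simp add: mult.assoc)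
  also have "\<dots> \<approx> p * 1 * q" using xy p q by (intro eqv_multL eqv_multR)
  finally show ?thesis by simp
qed

end



lemma cc_expand: "cc d j = (\<Sum>a<d. \<Sum>b<d. \<Sum>c<d. tt j ^ a * tt (Suc j) ^ b * tt (Suc (Suc j)) ^ c)
   * (1 + gg j + gg (Suc j) + gg j * gg (Suc j) + gg (Suc j) * gg j + gg j * gg (Suc j) * gg j)"
  by (simp add: cc_def gsum_def)

context yh begin

definition WW :: "nat \<Rightarrow> fa" where "WW i = gg i * gg (Suc i) * gg (Suc (Suc i))"
definition VV :: "nat \<Rightarrow> fa" where "VV i = hinv (Suc (Suc i)) * hinv (Suc i) * hinv i"

lemma FA_WW [simp]: "1 \<le> i \<Longrightarrow> i + 3 \<le> n \<Longrightarrow> WW i \<in> FA n" by (simp add: WW_def)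
lemma FA_VV [simp]: "1 \<le> i \<Longrightarrow> i + 3 \<le> n \<Longrightarrow> VV i \<in> FA n" by (simp add: VV_def)

lemma WV: assumes i: "1 \<le> i" "i + 3 \<le> n" shows "WW i * VV i \<approx> 1"
proof -
  let ?a = "gg i" and ?b = "gg (Suc i)" and ?c = "gg (Suc (Suc i))"
  let ?h0 = "hinv i" and ?h1 = "hinv (Suc i)" and ?h2 = "hinv (Suc (Suc i))"
  have "WW i * VV i = (?a * ?b) * ?c * ?h2 * (?h1 * ?h0)" by (simp add: WW_def VV_def mult.assoc)
  also have "\<dots> \<approx> (?a * ?b) * (?h1 * ?h0)" using i by (intro cancel gh) simp_all
  also have "(?a * ?b) * (?h1 * ?h0) = ?a * ?b * ?h1 * ?h0" by (simp add: mult.assoc)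
  also have "\<dots> \<approx> ?a * ?h0" using i by (intro cancel gh) simp_all
  also have "\<dots> \<approx> 1" using i by (intro gh) simp_all
  finally show ?thesis .
qed

lemma VW: assumes i: "1 \<le> i" "i + 3 \<le> n" shows "VV i * WW i \<approx> 1"
proof -
  let ?a = "gg i" and ?b = "gg (Suc i)" and ?c = "gg (Suc (Suc i))"
  let ?h0 = "hinv i" and ?h1 = "hinv (Suc i)" and ?h2 = "hinv (Suc (Suc i))"
  have "VV i * WW i = (?h2 * ?h1) * ?h0 * ?a * (?b * ?c)" by (simp add: WW_def VV_def mult.assoc)
  also have "\<dots> \<approx> (?h2 * ?h1) * (?b * ?c)" using i by (intro cancel hg) simp_all
  also have "(?h2 * ?h1) * (?b * ?c) = ?h2 * ?h1 * ?b * ?c" by (simp add: mult.assoc)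
  also have "\<dots> \<approx> ?h2 * ?c" using i by (intro cancel hg) simp_all
  also have "\<dots> \<approx> 1" using i by (intro hg) simp_all
  finally show ?thesis .
qed

lemma W_ga: assumes i: "1 \<le> i" "i + 3 \<le> n" shows "itw (WW i) (gg i) (gg (Suc i))"
proof -
  let ?a = "gg i" and ?b = "gg (Suc i)" and ?c = "gg (Suc (Suc i))"
  have a: "?a \<in> FA n" and b: "?b \<in> FA n" and c: "?c \<in> FA n" using i by simp_all
  have ca: "?c * ?a \<approx> ?a * ?c" using i by (intro rel_gfar) simp_all
  have br: "?b * ?a * ?b \<approx> ?a * ?b * ?a" using i by (intro rel_braid) simp_all
  have "WW i * ?a = ?a * ?b * (?c * ?a)" by (simp add: WW_def mult.assoc)
  also have "\<dots> \<approx> ?a * ?b * (?a * ?c)" using ca a b by (intro eqv_multL) simp_all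
  also have "\<dots> = (?a * ?b * ?a) * ?c" by (simp add: mult.assoc)
  also have "\<dots> \<approx> (?b * ?a * ?b) * ?c" by (rule eqv_multR[OF c eqv_sym[OF br]])
  also have "\<dots> = ?b * WW i" by (simp add: WW_def mult.assoc)
  finally show ?thesis by (simp add: itw_def)
qed

lemma W_gb: assumes i: "1 \<le> i" "i + 3 \<le> n" shows "itw (WW i) (gg (Suc i)) (gg (Suc (Suc i)))"
proof -
  let ?a = "gg i" and ?b = "gg (Suc i)" and ?c = "gg (Suc (Suc i))"
  have a: "?a \<in> FA n" and b: "?b \<in> FA n" and c: "?c \<in> FA n" using i by simp_all
  have ac: "?a * ?c \<approx> ?c * ?a" using i by (intro rel_gfar) simp_all
  have br: "?c * ?b * ?c \<approx> ?b * ?c * ?b" using i by (intro rel_braid) simp_all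
  have "WW i * ?b = ?a * (?b * ?c * ?b)" by (simp add: WW_def mult.assoc)
  also have "\<dots> \<approx> ?a * (?c * ?b * ?c)" by (rule eqv_multL[OF a eqv_sym[OF br]])
  also have "\<dots> = (?a * ?c) * (?b * ?c)" by (simp add: mult.assoc)
  also have "\<dots> \<approx> (?c * ?a) * (?b * ?c)" using ac b c by (intro eqv_multR) simp_all
  also have "\<dots> = ?c * WW i" by (simp add: WW_def mult.assoc)
  finally show ?thesis by (simp add: itw_def)
qed

lemma tri_chain: "itw c x y \<Longrightarrow> itw b y y' \<Longrightarrow> itw a y' z \<Longrightarrow> a \<in> FA n \<Longrightarrow> b \<in> FA n \<Longrightarrow> c \<in> FA n
   \<Longrightarrow> itw (a * b * c) x z"
  by (intro itw_chain[of c x y "a * b" z] itw_chain[of b y y' a z]) simp_all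

lemma W_t0: assumes i: "1 \<le> i" "i + 3 \<le> n" shows "itw (WW i) (tt i) (tt (Suc i))"
  unfolding WW_def using i
  by (intro tri_chain[of _ _ "tt i" _ "tt i"]) (simp_all add: itw_def rel_gt3 rel_gt1)

lemma W_t1: assumes i: "1 \<le> i" "i + 3 \<le> n" shows "itw (WW i) (tt (Suc i)) (tt (Suc (Suc i)))"
  unfolding WW_def using i
  by (intro tri_chain[of _ _ "tt (Suc i)" _ "tt (Suc (Suc i))"]) (simp_all add: itw_def rel_gt3 rel_gt1)

lemma W_t2: assumes i: "1 \<le> i" "i + 3 \<le> n" shows "itw (WW i) (tt (Suc (Suc i))) (tt (Suc (Suc (Suc i))))"
  unfolding WW_def using i
  by (intro tri_chain[of _ _ "tt (Suc (Suc (Suc i)))" _ "tt (Suc (Suc (Suc i)))"]) (simp_all add: itw_def rel_gt3 rel_gt1)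

lemma W_cc: assumes i: "1 \<le> i" "i + 3 \<le> n" shows "itw (WW i) (cc d i) (cc d (Suc i))"
  unfolding cc_expand using i
  by (intro itw_mult itw_add itw_sum itw_pow itw_one W_ga W_gb W_t0 W_t1 W_t2) simp_all

lemma shift_up: assumes i: "1 \<le> i" "i + 3 \<le> n" and h: "cc d i \<in> ideal_gen n S"
  shows "cc d (Suc i) \<in> ideal_gen n S"
proof -
  let ?C0 = "cc d i" and ?C1 = "cc d (Suc i)" and ?W = "WW i" and ?V = "VV i"
  have e: "?C1 = ?C1 * (1 - ?W * ?V) + (?C1 * ?W - ?W * ?C0) * ?V + ?W * ?C0 * ?V"
    by (simp add: algebra_simps)
  have 1: "1 - ?W * ?V \<in> ideal_gen n S"
    using ideal_uminus[of "?W * ?V - 1" n S] WV[OF i] by (simp add: eqv_def)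
  have 2: "?C1 * ?W - ?W * ?C0 \<in> ideal_gen n S"
    using ideal_uminus[of "?W * ?C0 - ?C1 * ?W" n S] W_cc[OF i] by (simp add: eqv_def itw_def)
  have "?C1 * (1 - ?W * ?V) + (?C1 * ?W - ?W * ?C0) * ?V + ?W * ?C0 * ?V \<in> ideal_gen n S"
    using 1 2 h i by (intro ideal_gen.add ideal_mult_left ideal_mult_right) simp_all
  then show ?thesis using e by simp
qed

lemma shift_down: assumes i: "1 \<le> i" "i + 3 \<le> n" and h: "cc d (Suc i) \<in> ideal_gen n S"
  shows "cc d i \<in> ideal_gen n S"
proof -
  let ?C0 = "cc d i" and ?C1 = "cc d (Suc i)" and ?W = "WW i" and ?V = "VV i"
  have e: "?C0 = (1 - ?V * ?W) * ?C0 + ?V * (?W * ?C0 - ?C1 * ?W) + ?V * ?C1 * ?W"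
    by (simp add: algebra_simps)
  have 1: "1 - ?V * ?W \<in> ideal_gen n S"
    using ideal_uminus[of "?V * ?W - 1" n S] VW[OF i] by (simp add: eqv_def)
  have 2: "?W * ?C0 - ?C1 * ?W \<in> ideal_gen n S"
    using W_cc[OF i] by (simp add: eqv_def itw_def)
  have "(1 - ?V * ?W) * ?C0 + ?V * (?W * ?C0 - ?C1 * ?W) + ?V * ?C1 * ?W \<in> ideal_gen n S"
    using 1 2 h i by (intro ideal_gen.add ideal_mult_left ideal_mult_right) simp_all
  then show ?thesis using e by simp
qed

end



theorem corollary2:
  fixes d n i :: nat and u :: complex
  assumes "d \<ge> 1" and "n \<ge> 3" and "u \<noteq> 0"
    and "1 \<le> i" and "i \<le> n - 2"
  shows "ideal_gen n (YH_rels d n u \<union> {cc d i})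
           = ideal_gen n (YH_rels d n u \<union> {cc d j | j. 1 \<le> j \<and> j \<le> n - 2})"
proof -
  let ?S1 = "YH_rels d n u \<union> {cc d i}"
  let ?S2 = "YH_rels d n u \<union> {cc d j | j. 1 \<le> j \<and> j \<le> n - 2}"
  interpret Y: yh d n u ?S1 using assms by unfold_locales auto
  have base: "cc d i \<in> ideal_gen n ?S1" by (intro ideal_base) simp
  have up: "i + m \<le> n - 2 \<longrightarrow> cc d (i + m) \<in> ideal_gen n ?S1" for m
  proof (induction m)
    case 0 then show ?case using base by simp
  next
    case (Suc m)
    show ?case
    proof
      assume h: "i + Suc m \<le> n - 2"
      have c: "cc d (i + m) \<in> ideal_gen n ?S1" using Suc h by simp
      have "cc d (Suc (i + m)) \<in> ideal_gen n ?S1"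
        by (rule Y.shift_up[OF _ _ c]) (use h assms in simp_all)
      then show "cc d (i + Suc m) \<in> ideal_gen n ?S1" by simp
    qed
  qed
  have down: "m < i \<longrightarrow> cc d (i - m) \<in> ideal_gen n ?S1" for m
  proof (induction m)
    case 0 then show ?case using base by simp
  next
    case (Suc m)
    show ?case
    proof
      assume h: "Suc m < i"
      have c: "cc d (Suc (i - Suc m)) \<in> ideal_gen n ?S1" using Suc h
        by (simp add: Suc_diff_Suc)
      show "cc d (i - Suc m) \<in> ideal_gen n ?S1"
        by (rule Y.shift_down[OF _ _ c]) (use h assms in simp_all)
    qed
  qed
  have all: "cc d j \<in> ideal_gen n ?S1" if j: "1 \<le> j" "j \<le> n - 2" for j
  proof (cases "i \<le> j")
    case True
    then have "j = i + (j - i)" by simp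
    then show ?thesis using up[of "j - i"] j by simp
  next
    case False
    then have "j = i - (i - j)" by simp
    then show ?thesis using down[of "i - j"] j False by simp
  qed
  show ?thesis
  proof
    show "ideal_gen n ?S1 \<subseteq> ideal_gen n ?S2"
    proof
      fix x assume "x \<in> ideal_gen n ?S1"
      moreover have "?S1 \<subseteq> ?S2" using assms by auto
      ultimately show "x \<in> ideal_gen n ?S2" by (intro ideal_mono[of ?S1 ?S2])
    qed
  next
    show "ideal_gen n ?S2 \<subseteq> ideal_gen n ?S1"
    proof
      fix x assume x: "x \<in> ideal_gen n ?S2"
      have "?S2 \<subseteq> ideal_gen n ?S1"
      proof
        fix s assume "s \<in> ?S2"
        then consider "s \<in> YH_rels d n u" | j where "s = cc d j" "1 \<le> j" "j \<le> n - 2" by blast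
        then show "s \<in> ideal_gen n ?S1"
        proof cases
          case 1 then show ?thesis by (intro ideal_base) simp
        next
          case 2 then show ?thesis using all by simp
        qed
      qed
      with x show "x \<in> ideal_gen n ?S1" by (rule ideal_subset)
    qed
  qed
qed



end
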